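(* Let $\boldsymbol{M}$ be a weight sequence with $\gamma(\boldsymbol{M})>0$. Then $\mathcal{M}(C_{\{\boldsymbol{M}\}}(0,\infty))\subset\Lambda_{\{\boldsymbol{M}_{+1}\}}$ if and only if $\boldsymbol{M}$ satisfies $\operatorname{(sm)}$.
   Context: Sequences are of positive reals indexed by $\mathbb{N}_0$; $m_p=M_{p+1}/M_p$. Weight sequence: $M_0=1$, $M_p^2\le M_{p-1}M_{p+1}$ ($p\ge1$), $m_p\to\infty$. $\operatorname{(sm)}$: there are $C_0>0$, $H>1$ with $\log(m_{p+1}/m_p)\le C_0H^{p+1}$ for all $p\in\mathbb{N}_0$. $\boldsymbol{M}_{+1}=(M_{p+1})_p$. A sequence $(c_p)$ is almost increasing if $c_p\le ac_q$ for all $q\ge p$, some $a>0$; $\gamma(\boldsymbol{M})=\sup\{\mu>0:(m_p/(p+1)^\mu)_p\text{ almost increasing}\}\in[0,\infty]$. $C_{\{\boldsymbol{M}\}}(0,\infty)$: continuous $\varphi$ on $(0,\infty)$ with $\sup_p\sup_{x>0}x^p|\varphi(x)|/(h^pM_p)<\infty$ for some $h>0$. For a sequence $\boldsymbol{N}$, $\Lambda_{\{\boldsymbol{N}\}}$: complex sequences with $\sup_p|c_p|/(h^pN_p)<\infty$ for some $h>0$. $\mathcal{M}(\varphi)=(\int_0^\infty x^p\varphi(x)\,dx)_p$. *)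

theory Defs
  imports "HOL-Analysis.Analysis"
begin

definition quot_seq :: "(nat \<Rightarrow> real) \<Rightarrow> nat \<Rightarrow> real" where
  "quot_seq M p = M (Suc p) / M p"

definition weight_sequence :: "(nat \<Rightarrow> real) \<Rightarrow> bool" where
  "weight_sequence M \<longleftrightarrow> (\<forall>p. M p > 0) \<and> M 0 = 1 \<and>
     (\<forall>p\<ge>1. (M p)^2 \<le> M (p - 1) * M (p + 1)) \<and>
     filterlim (quot_seq M) at_top sequentially"

definition cond_sm :: "(nat \<Rightarrow> real) \<Rightarrow> bool" where
  "cond_sm M \<longleftrightarrow> (\<exists>C0 > 0. \<exists>H > 1. \<forall>p.
     ln (quot_seq M (Suc p) / quot_seq M p) \<le> C0 * H ^ (p + 1))"

definition shift1 :: "(nat \<Rightarrow> real) \<Rightarrow> nat \<Rightarrow> real" where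
  "shift1 M p = M (p + 1)"

definition almost_increasing :: "(nat \<Rightarrow> real) \<Rightarrow> bool" where
  "almost_increasing c \<longleftrightarrow> (\<exists>a > 0. \<forall>p q. p \<le> q \<longrightarrow> c p \<le> a * c q)"

text \<open>gamma index, valued in [0, infinity]; the supremum of the empty set is taken to be 0.\<close>
definition gamma_idx :: "(nat \<Rightarrow> real) \<Rightarrow> ereal" where
  "gamma_idx M = Sup ({0} \<union> {ereal \<mu> | \<mu>. \<mu> > 0 \<and>
      almost_increasing (\<lambda>p. quot_seq M p / (real p + 1) powr \<mu>)})"

definition C_roumieu :: "(nat \<Rightarrow> real) \<Rightarrow> (real \<Rightarrow> complex) set" where
  "C_roumieu M = {\<phi>. continuous_on {0<..} \<phi> \<and>
     (\<exists>h > 0. \<exists>C. \<forall>p. \<forall>x > 0. x ^ p * norm (\<phi> x) \<le> C * (h ^ p * M p))}"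

definition Lambda_roumieu :: "(nat \<Rightarrow> real) \<Rightarrow> (nat \<Rightarrow> complex) set" where
  "Lambda_roumieu N = {c. \<exists>h > 0. \<exists>C. \<forall>p. norm (c p) \<le> C * (h ^ p * N p)}"

definition moment_map :: "(real \<Rightarrow> complex) \<Rightarrow> nat \<Rightarrow> complex" where
  "moment_map \<phi> p = integral {0<..} (\<lambda>x. complex_of_real (x ^ p) * \<phi> x)"

end

theory Submission
  imports Defs
begin

lemma moment_bound_gen:
  fixes \<phi> :: "real \<Rightarrow> complex" and a b c1 c2 c3 :: real
  assumes cont: "continuous_on {0<..} \<phi>" and a: "0 < a" "a \<le> b"
    and c: "0 \<le> c1" "0 \<le> c2" "0 \<le> c3"
    and b1: "\<And>x. x > 0 \<Longrightarrow> x ^ p * norm (\<phi> x) \<le> c1"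
    and b2: "\<And>x. x > 0 \<Longrightarrow> x ^ p * norm (\<phi> x) \<le> c2 / x"
    and b3: "\<And>x. x > 0 \<Longrightarrow> x ^ p * norm (\<phi> x) \<le> c3 / x^2"
  shows "(\<lambda>x. complex_of_real (x ^ p) * \<phi> x) integrable_on {0<..}"
    and "norm (integral {0<..} (\<lambda>x. complex_of_real (x ^ p) * \<phi> x))
           \<le> c1 * a + c2 * (ln b - ln a) + c3 / b"
proof -
  define f where "f = (\<lambda>x. complex_of_real (x ^ p) * \<phi> x)"
  define f' where "f' = (\<lambda>x. if x \<in> {0<..} then f x else 0)"
  define g1 where "g1 = (\<lambda>x::real. if x \<in> {0..a} then c1 else 0)"
  define g2 where "g2 = (\<lambda>x::real. if x \<in> {a..b} then c2 / x else 0)"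
  define g3 where "g3 = (\<lambda>x::real. if x \<in> {b..} then c3 / x^2 else 0)"
  define g where "g = (\<lambda>x. g1 x + g2 x + g3 x)"
  have b0: "0 < b" using a by linarith
  have "((\<lambda>x. c1) has_integral (c1 * a)) {0..a}"
    using has_integral_const_real[of c1 0 a] a by (simp add: mult.commute)
  then have i1: "(g1 has_integral (c1 * a)) UNIV"
    unfolding g1_def by (subst has_integral_restrict) auto
  have "((\<lambda>x. c2 * (1 / x)) has_integral (c2 * (ln b - ln a))) {a..b}"
  proof (rule has_integral_mult_right)
    show "((\<lambda>x. 1 / x) has_integral (ln b - ln a)) {a..b}"
      using a
      by (intro fundamental_theorem_of_calculus)
         (auto intro!: derivative_eq_intros simp: field_simps
               simp flip: has_real_derivative_iff_has_vector_derivative)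
  qed
  then have i2: "(g2 has_integral (c2 * (ln b - ln a))) UNIV"
    unfolding g2_def by (subst has_integral_restrict) auto
  have "((\<lambda>x. c3 * (1 / x ^ 2)) has_integral (c3 * (1 / b))) {b..}"
    using has_integral_mult_right[OF has_integral_inverse_power_to_inf[of 2 b]] b0 by simp
  then have i3: "(g3 has_integral (c3 / b)) UNIV"
    unfolding g3_def by (subst has_integral_restrict) auto
  have ig: "(g has_integral (c1 * a + c2 * (ln b - ln a) + c3 / b)) UNIV"
    unfolding g_def by (intro has_integral_add i1 i2 i3)
  have gnn: "0 \<le> g1 x" "0 \<le> g2 x" "0 \<le> g3 x" for x
    using c a by (auto simp: g1_def g2_def g3_def)
  have nf: "norm (f' x) \<le> g x" for x
  proof (cases "x > 0")
    case False
    then show ?thesis using gnn[of x] by (simp add: f'_def g_def)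
  next
    case True
    have nfx: "norm (f' x) = x ^ p * norm (\<phi> x)"
      using True by (simp add: f'_def f_def norm_mult norm_power)
    consider "x \<le> a" | "a \<le> x" "x \<le> b" | "b \<le> x" by linarith
    then show ?thesis
    proof cases
      case 1
      then have "g1 x = c1" using True by (simp add: g1_def)
      then show ?thesis using b1[OF True] gnn[of x] nfx by (simp add: g_def)
    next
      case 2
      then have "g2 x = c2 / x" by (simp add: g2_def)
      then show ?thesis using b2[OF True] gnn[of x] nfx by (simp add: g_def)
    next
      case 3
      then have "g3 x = c3 / x^2" by (simp add: g3_def)
      then show ?thesis using b3[OF True] gnn[of x] nfx by (simp add: g_def)
    qed
  qed
  have "continuous_on {0<..} f"
    unfolding f_def by (intro continuous_intros cont)
  then have "f \<in> borel_measurable (lebesgue_on {0<..})"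
    by (intro continuous_imp_measurable_on_sets_lebesgue) auto
  then have mf: "f' \<in> borel_measurable (lebesgue_on UNIV)"
    unfolding f'_def using borel_measurable_if[of "{0::real<..}" f] by simp
  have gi: "g integrable_on UNIV" using ig by blast
  have fi: "f' integrable_on UNIV"
    by (rule measurable_bounded_by_integrable_imp_integrable[OF mf gi]) (use nf in auto)
  then show "f integrable_on {0<..}"
    unfolding f'_def integrable_on_def by (subst (asm) has_integral_restrict) auto
  have "norm (integral UNIV f') \<le> integral UNIV g"
    by (rule integral_norm_bound_integral[OF fi gi]) (use nf in auto)
  also have "integral UNIV g = c1 * a + c2 * (ln b - ln a) + c3 / b"
    using ig by (rule integral_unique)
  also have "integral UNIV f' = integral {0<..} f"
    unfolding f'_def by (rule integral_restrict_UNIV)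
  finally show "norm (integral {0<..} f) \<le> c1 * a + c2 * (ln b - ln a) + c3 / b" .
qed


lemma ws_pos: "weight_sequence M \<Longrightarrow> M p > 0"
  by (simp add: weight_sequence_def)

lemma m_pos: "weight_sequence M \<Longrightarrow> quot_seq M p > 0"
  by (simp add: quot_seq_def ws_pos)

lemma M_Suc: "weight_sequence M \<Longrightarrow> M (Suc p) = quot_seq M p * M p"
  using ws_pos[of M p] by (simp add: quot_seq_def)

lemma m_step: assumes "weight_sequence M" shows "quot_seq M p \<le> quot_seq M (Suc p)"
proof -
  have "(M (Suc p))^2 \<le> M p * M (Suc (Suc p))"
    using assms unfolding weight_sequence_def
    by (metis One_nat_def Suc_eq_plus1 diff_Suc_1 le_add2)
  moreover have "M p > 0" "M (Suc p) > 0" using ws_pos[OF assms] by auto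
  ultimately show ?thesis unfolding quot_seq_def
    by (simp add: divide_simps power2_eq_square mult.commute)
qed

lemma m_mono: assumes "weight_sequence M" "p \<le> q" shows "quot_seq M p \<le> quot_seq M q"
  using assms(2) by (induction rule: dec_induct) (use m_step[OF assms(1)] order_trans in blast)+

lemma m_unbounded: assumes "weight_sequence M" shows "\<exists>N. x \<le> quot_seq M N"
proof -
  have "filterlim (quot_seq M) at_top sequentially" using assms by (simp add: weight_sequence_def)
  then have "eventually (\<lambda>n. x \<le> quot_seq M n) sequentially"
    by (simp add: filterlim_at_top)
  then show ?thesis by (metis eventually_sequentially order_refl)
qed

lemma up_step:
  assumes ws: "weight_sequence M" and x: "x > 0" and kq: "k \<le> q" and xk: "x \<le> quot_seq M k"
  shows "M k / x ^ k \<le> M q / x ^ q"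
  using kq
proof (induction rule: dec_induct)
  case base then show ?case by simp
next
  case (step n)
  have "x \<le> quot_seq M n" using xk m_mono[OF ws step(1)] by linarith
  then have "M n / x ^ n \<le> M (Suc n) / x ^ Suc n"
    using x ws_pos[OF ws, of n] by (simp add: M_Suc[OF ws] divide_simps mult.commute mult_right_mono)
  then show ?case using step(3) by linarith
qed

lemma down_step:
  assumes ws: "weight_sequence M" and x: "x > 0" and qk: "q \<le> k" and xk: "\<forall>j<k. quot_seq M j \<le> x"
  shows "M k / x ^ k \<le> M q / x ^ q"
  using qk xk
proof (induction rule: dec_induct)
  case base then show ?case by simp
next
  case (step n)
  have "quot_seq M n \<le> x" using step by auto
  then have "M (Suc n) / x ^ Suc n \<le> M n / x ^ n"
    using x ws_pos[OF ws, of n] by (simp add: M_Suc[OF ws] divide_simps mult.commute mult_right_mono)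
  then show ?case using step by auto
qed

fun fmin :: "(nat \<Rightarrow> real) \<Rightarrow> nat \<Rightarrow> real \<Rightarrow> real" where
  "fmin M 0 x = M 0"
| "fmin M (Suc n) x = min (fmin M n x) (M (Suc n) / x ^ Suc n)"

lemma fmin_le: "q \<le> N \<Longrightarrow> fmin M N x \<le> M q / x ^ q"
  by (induction N) (auto simp: le_Suc_eq)

lemma fmin_ge: "(\<And>q. q \<le> N \<Longrightarrow> L \<le> M q / x ^ q) \<Longrightarrow> L \<le> fmin M N x"
proof (induction N)
  case 0 then show ?case by (metis fmin.simps(1) div_by_1 order_refl power_0)
next
  case (Suc N)
  have "L \<le> fmin M N x" using Suc by simp
  moreover have "L \<le> M (Suc N) / x ^ Suc N" using Suc.prems by blast
  ultimately show ?case by simp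
qed

lemma fmin_cont: "continuous_on {0<..} (fmin M N)"
  by (induction N) (auto intro!: continuous_intros)

lemma fmin_stable:
  assumes ws: "weight_sequence M" and x: "x > 0" and xN: "x \<le> quot_seq M N" and NN: "N \<le> N'"
  shows "fmin M N' x = fmin M N x"
  using NN
proof (induction rule: dec_induct)
  case base then show ?case by simp
next
  case (step n)
  have "fmin M n x \<le> M N / x ^ N" using step fmin_le[of N n M x] by simp
  also have "\<dots> \<le> M (Suc n) / x ^ Suc n" using up_step[OF ws x _ xN, of "Suc n"] step by simp
  finally show ?case using step by simp
qed

definition phi0 :: "(nat \<Rightarrow> real) \<Rightarrow> real \<Rightarrow> real" where
  "phi0 M x = fmin M (LEAST N. x \<le> quot_seq M N) x"

lemma phi0_eq:
  assumes ws: "weight_sequence M" and x: "x > 0" and xN: "x \<le> quot_seq M N"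
  shows "phi0 M x = fmin M N x"
proof -
  let ?L = "LEAST N. x \<le> quot_seq M N"
  have "?L \<le> N" using xN by (rule Least_le)
  moreover have "x \<le> quot_seq M ?L" using xN by (rule LeastI)
  ultimately show ?thesis unfolding phi0_def using fmin_stable[OF ws x] by metis
qed

lemma phi0_upper:
  assumes ws: "weight_sequence M" and x: "x > 0"
  shows "x ^ p * phi0 M x \<le> M p"
proof -
  obtain N0 where "x \<le> quot_seq M N0" using m_unbounded[OF ws] by blast
  then have "x \<le> quot_seq M (max N0 p)" using m_mono[OF ws, of N0 "max N0 p"] by linarith
  then have "phi0 M x = fmin M (max N0 p) x" by (rule phi0_eq[OF ws x])
  also have "\<dots> \<le> M p / x ^ p" by (rule fmin_le) simp
  finally show ?thesis using x by (simp add: field_simps mult.commute)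
qed

lemma phi0_lower:
  assumes ws: "weight_sequence M" and x: "quot_seq M p \<le> x" "x \<le> quot_seq M (Suc p)"
  shows "M (Suc p) / x ^ Suc p \<le> phi0 M x"
proof -
  have x0: "x > 0" using m_pos[OF ws, of p] x by linarith
  have "phi0 M x = fmin M (Suc p) x" by (rule phi0_eq[OF ws x0 x(2)])
  moreover have "M (Suc p) / x ^ Suc p \<le> fmin M (Suc p) x"
  proof (rule fmin_ge)
    fix q assume "q \<le> Suc p"
    moreover have "\<forall>j<Suc p. quot_seq M j \<le> x"
      using m_mono[OF ws] x(1) by (meson less_Suc_eq_le order_trans)
    ultimately show "M (Suc p) / x ^ Suc p \<le> M q / x ^ q" by (rule down_step[OF ws x0])
  qed
  ultimately show ?thesis by simp
qed

lemma phi0_cont: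
  assumes ws: "weight_sequence M"
  shows "continuous_on {0<..} (phi0 M)"
proof -
  have U: "{0<..} = \<Union>(range (\<lambda>N. {0<..<quot_seq M N}))"
  proof (intro equalityI subsetI)
    fix x :: real assume "x \<in> {0<..}"
    obtain N where "x + 1 \<le> quot_seq M N" using m_unbounded[OF ws] by blast
    then have "x < quot_seq M N" by linarith
    then show "x \<in> \<Union>(range (\<lambda>N. {0<..<quot_seq M N}))" using \<open>x \<in> {0<..}\<close> by auto
  qed auto
  have "continuous_on {0<..<quot_seq M N} (phi0 M)" for N
  proof -
    have "continuous_on {0<..<quot_seq M N} (fmin M N)"
      by (rule continuous_on_subset[OF fmin_cont]) auto
    then show ?thesis
      by (rule continuous_on_cong[THEN iffD1, rotated 2]) (auto intro!: phi0_eq[OF ws, symmetric] less_imp_le)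
  qed
  then show ?thesis by (subst U, intro continuous_on_open_Union) auto
qed


lemma ln_ratio: assumes ws: "weight_sequence M"
  shows "ln (quot_seq M (Suc p) / quot_seq M p) = ln (quot_seq M (Suc p)) - ln (quot_seq M p)"
  using m_pos[OF ws, of p] m_pos[OF ws, of "Suc p"] by (simp add: ln_div)

lemma sm_imp_incl:
  assumes ws: "weight_sequence M" and sm: "cond_sm M"
  shows "moment_map ` C_roumieu M \<subseteq> Lambda_roumieu (shift1 M)"
proof
  fix c assume "c \<in> moment_map ` C_roumieu M"
  then obtain \<phi> where c: "c = moment_map \<phi>" and \<phi>: "\<phi> \<in> C_roumieu M" by blast
  from \<phi> obtain h C where cont: "continuous_on {0<..} \<phi>" and h: "h > 0"
    and bd: "\<And>p x. x > 0 \<Longrightarrow> x ^ p * norm (\<phi> x) \<le> C * (h ^ p * M p)"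
    unfolding C_roumieu_def by blast
  from sm obtain C0 H where C0: "C0 > 0" and H: "H > 1"
    and smb: "\<And>p. ln (quot_seq M (Suc p) / quot_seq M p) \<le> C0 * H ^ (p + 1)"
    unfolding cond_sm_def by blast
  have "norm (\<phi> 1) \<le> C" using bd[of 1 0] ws by (simp add: weight_sequence_def)
  then have C: "C \<ge> 0" by (meson norm_ge_zero order_trans)
  have Mp: "\<And>p. M p > 0" using ws_pos[OF ws] .
  have mp: "\<And>p. quot_seq M p > 0" using m_pos[OF ws] .
  show "c \<in> Lambda_roumieu (shift1 M)"
    unfolding Lambda_roumieu_def
  proof (intro CollectI exI conjI allI)
    show "h * H > 0" using h H by simp
    fix p
    define a where "a = h * quot_seq M p"
    define b where "b = h * quot_seq M (Suc p)"
    have a: "0 < a" "a \<le> b" using h mp m_step[OF ws, of p] by (auto simp: a_def b_def)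
    have bb2: "x ^ p * norm (\<phi> x) \<le> (C * (h ^ Suc p * M (Suc p))) / x" if "x > 0" for x
      using bd[OF that, of "Suc p"] that by (simp add: field_simps)
    have bb3: "x ^ p * norm (\<phi> x) \<le> (C * (h ^ Suc (Suc p) * M (Suc (Suc p)))) / x^2" if "x > 0" for x
      using bd[OF that, of "Suc (Suc p)"] that by (simp add: field_simps power2_eq_square)
    have nn: "0 \<le> C * (h ^ q * M q)" for q
      using C h Mp[of q] by simp
    have nb: "norm (c p) \<le> (C * (h ^ p * M p)) * a
        + (C * (h ^ Suc p * M (Suc p))) * (ln b - ln a) + (C * (h ^ Suc (Suc p) * M (Suc (Suc p)))) / b"
      unfolding c moment_map_def
      by (rule moment_bound_gen(2)[OF cont a nn nn nn]) (use bd bb2 bb3 in auto)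
    have e1: "(C * (h ^ p * M p)) * a = C * h ^ Suc p * M (Suc p)"
      by (simp add: a_def M_Suc[OF ws])
    have e3: "(C * (h ^ Suc (Suc p) * M (Suc (Suc p)))) / b = C * h ^ Suc p * M (Suc p)"
      using h mp[of "Suc p"] by (simp add: b_def M_Suc[OF ws, of "Suc p"] field_simps)
    have e2: "ln b - ln a = ln (quot_seq M (Suc p) / quot_seq M p)"
      using h mp[of p] mp[of "Suc p"] by (simp add: a_def b_def ln_mult ln_ratio[OF ws])
    have K: "0 \<le> C * h ^ Suc p * M (Suc p)" using nn[of "Suc p"] by (simp add: mult.assoc)
    have "norm (c p) \<le> C * h ^ Suc p * M (Suc p) * (2 + ln (quot_seq M (Suc p) / quot_seq M p))"
      using nb unfolding e1 e2 e3 by (simp add: algebra_simps)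
    also have "\<dots> \<le> C * h ^ Suc p * M (Suc p) * (2 + C0 * H ^ (p + 1))"
      using K smb[of p] by (intro mult_left_mono) auto
    also have "\<dots> \<le> C * h ^ Suc p * M (Suc p) * ((2 + C0) * H ^ (p + 1))"
    proof (intro mult_left_mono K)
      have "1 \<le> H ^ (p + 1)" using H by (intro one_le_power) simp
      then show "2 + C0 * H ^ (p + 1) \<le> (2 + C0) * H ^ (p + 1)" by (simp add: algebra_simps)
    qed
    also have "\<dots> = (C * h * (2 + C0) * H) * ((h * H) ^ p * shift1 M p)"
      by (simp add: shift1_def power_mult_distrib algebra_simps)
    finally show "norm (c p) \<le> (C * h * (2 + C0) * H) * ((h * H) ^ p * shift1 M p)" .
  qed
qed


lemma incl_imp_sm:
  assumes ws: "weight_sequence M" and incl: "moment_map ` C_roumieu M \<subseteq> Lambda_roumieu (shift1 M)"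
  shows "cond_sm M"
proof -
  define \<phi> where "\<phi> = (\<lambda>x. complex_of_real (phi0 M x))"
  have Mp: "\<And>p. M p > 0" using ws_pos[OF ws] .
  have mp: "\<And>p. quot_seq M p > 0" using m_pos[OF ws] .
  have pnn: "0 \<le> phi0 M x" if "x > 0" for x
  proof -
    have "x ^ 0 * phi0 M x \<le> M 0" using phi0_upper[OF ws that] .
    obtain N where "x \<le> quot_seq M N" using m_unbounded[OF ws] by blast
    then have "phi0 M x = fmin M N x" by (rule phi0_eq[OF ws that])
    also have "fmin M N x \<ge> 0"
      by (rule fmin_ge) (use Mp that in \<open>auto intro: less_imp_le\<close>)
    finally show ?thesis by simp
  qed
  have cont: "continuous_on {0<..} \<phi>"
    unfolding \<phi>_def by (intro continuous_on_of_real phi0_cont[OF ws])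
  have nphi: "norm (\<phi> x) = phi0 M x" if "x > 0" for x
    using pnn[OF that] by (simp add: \<phi>_def)
  have bd: "x ^ p * norm (\<phi> x) \<le> M p" if "x > 0" for x p
    using phi0_upper[OF ws that] nphi[OF that] by simp
  have "\<phi> \<in> C_roumieu M"
    unfolding C_roumieu_def using cont bd by (intro CollectI conjI exI[of _ 1]) auto
  then have "moment_map \<phi> \<in> Lambda_roumieu (shift1 M)" using incl by blast
  then obtain h C where h: "h > 0" and cb: "\<And>p. norm (moment_map \<phi> p) \<le> C * (h ^ p * M (Suc p))"
    unfolding Lambda_roumieu_def shift1_def by auto
  have main: "\<forall>p. ln (quot_seq M (Suc p) / quot_seq M p) \<le> (\<bar>C\<bar> + 1) * (h + 2) ^ (p + 1)"
  proof
    fix p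
    define a where "a = quot_seq M p"
    define b where "b = quot_seq M (Suc p)"
    have a: "0 < a" "a \<le> b" using mp m_step[OF ws, of p] by (auto simp: a_def b_def)
    define f where "f = (\<lambda>x. complex_of_real (x ^ p) * \<phi> x)"
    define \<psi> where "\<psi> = (\<lambda>x. x ^ p * phi0 M x)"
    have bb2: "x ^ p * norm (\<phi> x) \<le> M (Suc p) / x" if "x > 0" for x
      using bd[OF that, of "Suc p"] that by (simp add: field_simps)
    have bb3: "x ^ p * norm (\<phi> x) \<le> M (Suc (Suc p)) / x^2" if "x > 0" for x
      using bd[OF that, of "Suc (Suc p)"] that by (simp add: field_simps power2_eq_square)
    have fi: "f integrable_on {0<..}"
      unfolding f_def
      by (rule moment_bound_gen(1)[OF cont a, of "M p" "M (Suc p)" "M (Suc (Suc p))"])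
         (use Mp bd bb2 bb3 in \<open>auto intro: less_imp_le\<close>)
    then have "((\<lambda>x. Re (f x)) has_integral Re (integral {0<..} f)) {0<..}"
      by (intro has_integral_Re) (simp add: has_integral_integral)
    moreover have "Re (f x) = \<psi> x" for x by (simp add: f_def \<phi>_def \<psi>_def)
    ultimately have psi_int: "(\<psi> has_integral Re (moment_map \<phi> p)) {0<..}"
      by (simp add: moment_map_def f_def)
    have sub: "{a..b} \<subseteq> {0<..}" using a by auto
    have pcont: "continuous_on {0<..} \<psi>"
      unfolding \<psi>_def by (intro continuous_intros phi0_cont[OF ws])
    have psi_ab: "\<psi> integrable_on {a..b}"
      by (rule integrable_continuous_interval, rule continuous_on_subset[OF pcont sub])
    have "((\<lambda>x. M (Suc p) * (1 / x)) has_integral (M (Suc p) * (ln b - ln a))) {a..b}"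
    proof (rule has_integral_mult_right)
      show "((\<lambda>x. 1 / x) has_integral (ln b - ln a)) {a..b}"
        using a
        by (intro fundamental_theorem_of_calculus)
           (auto intro!: derivative_eq_intros simp: field_simps
                 simp flip: has_real_derivative_iff_has_vector_derivative)
    qed
    moreover have "M (Suc p) * (1 / x) \<le> \<psi> x" if "x \<in> {a..b}" for x
    proof -
      have x0: "x > 0" using that a by auto
      have "M (Suc p) / x ^ Suc p \<le> phi0 M x"
        using phi0_lower[OF ws, of p x] that by (simp add: a_def b_def)
      then have "x ^ p * (M (Suc p) / x ^ Suc p) \<le> x ^ p * phi0 M x"
        using x0 by (intro mult_left_mono) auto
      then show ?thesis using x0 by (simp add: \<psi>_def field_simps)
    qed
    ultimately have "M (Suc p) * (ln b - ln a) \<le> integral {a..b} \<psi>"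
      using psi_ab by (intro has_integral_le[OF _ integrable_integral[OF psi_ab]]) auto
    also have "\<dots> \<le> integral {0<..} \<psi>"
      by (rule integral_subset_le[OF sub psi_ab])
         (use psi_int pnn in \<open>auto simp: \<psi>_def\<close>)
    also have "\<dots> = Re (moment_map \<phi> p)" using psi_int by (rule integral_unique)
    also have "\<dots> \<le> norm (moment_map \<phi> p)" by (rule complex_Re_le_cmod)
    also have "\<dots> \<le> C * (h ^ p * M (Suc p))" by (rule cb)
    finally have "M (Suc p) * (ln b - ln a) \<le> M (Suc p) * (C * h ^ p)" by (simp add: algebra_simps)
    then have L: "ln b - ln a \<le> C * h ^ p" using Mp[of "Suc p"] by simp
    have "C * h ^ p \<le> \<bar>C\<bar> * h ^ p" using h by (intro mult_right_mono) auto
    also have "\<dots> \<le> \<bar>C\<bar> * (h + 2) ^ (p + 1)"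
    proof (intro mult_left_mono)
      have "h ^ p \<le> (h + 2) ^ p" using h by (intro power_mono) auto
      also have "\<dots> \<le> (h + 2) ^ (p + 1)" using h by (intro power_increasing) auto
      finally show "h ^ p \<le> (h + 2) ^ (p + 1)" .
    qed auto
    also have "\<dots> \<le> (\<bar>C\<bar> + 1) * (h + 2) ^ (p + 1)" using h by (intro mult_right_mono) auto
    finally show "ln (quot_seq M (Suc p) / quot_seq M p) \<le> (\<bar>C\<bar> + 1) * (h + 2) ^ (p + 1)"
      using L by (simp add: ln_ratio[OF ws] a_def b_def)
  qed
  have "\<bar>C\<bar> + 1 > 0" "h + 2 > 1" using h by auto
  then show ?thesis unfolding cond_sm_def using main by blast
qed

theorem proposition3p4:
  fixes M :: "nat \<Rightarrow> real"
  assumes "weight_sequence M"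
    and "gamma_idx M > 0"
  shows "moment_map ` C_roumieu M \<subseteq> Lambda_roumieu (shift1 M) \<longleftrightarrow> cond_sm M"
  using sm_imp_incl[OF assms(1)] incl_imp_sm[OF assms(1)] by blast

end
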